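(* Let $X,Y$ be Banach spaces and let $T(t):X\to X$ and $S(-t):Y\to Y$, $t\ge0$, be $C_0$ semigroups with $|T(t)|\le e^{\mu_st}$ and $|S(-t)|\le e^{-\mu_ut}$ for $t\ge0$. Equip $X\times Y$ with the max norm $|(x,y)|=\max\{|x|,|y|\}$ and let $B_1:X\times Y\to X$, $B_2:X\times Y\to Y$ be Lipschitz with $\mathrm{Lip}\,B_i\le\varepsilon$. Let $H$ be the continuous correspondence induced by $x(t)=T(t-t_1)x_1+\int_{t_1}^tT(t-s)B_1(x(s),y(s))\,ds$, $y(t)=S(t-t_2)y_2-\int_t^{t_2}S(t-s)B_2(x(s),y(s))\,ds$, $t_1\le t\le t_2$ (see context). Assume $\mu_u-\mu_s-2\varepsilon>0$. Take $\alpha,\beta$ with $\frac{\varepsilon}{\mu_u-\mu_s-\varepsilon}\le\alpha,\beta<1$ and $\lambda_u=e^{-\mu_u+\varepsilon}$, $\lambda_s=e^{\mu_s+\varepsilon}$. Then for every $t\ge0$, $H(t)$ satisfies the (A)$(\alpha,\lambda_u^t)$ (B)$(\beta,\lambda_s^t)$ condition. Moreover, if $\alpha,\beta\in(\frac{\varepsilon}{\mu_u-\mu_s-\varepsilon},1)$ and $t\ge\epsilon_1>0$, then $H(t)$ satisfies (A)$(\alpha;k_\alpha\alpha,\lambda_u^t)$ (B)$(\beta;k_\beta\beta,\lambda_s^t)$, where $k_h=\frac{(\mu_u-\mu_s-\varepsilon-\frac{\varepsilon}{h})e^{-(\mu_u-\mu_s-\varepsilon)\epsilon_1}+\frac{\varepsilon}{h}}{\mu_u-\mu_s-\varepsilon}<1$,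 $h=\alpha,\beta$.
   Context: For $t\le0$ write $S(t)$ for the operator $S(-(-t))$ of the given semigroup, so $S(t-t_2)$, $S(t-s)$ make sense for $t\le t_2$, $t\le s$. For given $x_1\in X$, $y_2\in Y$ and $t_1\le t_2$ the displayed integral system has a unique continuous solution $(x(t),y(t))$ on $[t_1,t_2]$ with $x(t_1)=x_1$, $y(t_2)=y_2$. For $s\ge0$, the correspondence $H(s):X\times Y\to X\times Y$ is defined by: $(x_2,y_2)\in H(s)(x_1,y_1)$ iff there is a continuous $(x(t),y(t))$, $0\le t\le s$, satisfying the system with $t_1=0$, $t_2=s$, $(x(0),y(0))=(x_1,y_1)$, $(x(s),y(s))=(x_2,y_2)$. (A)(B) condition for a correspondence $H$ with graph in $(X\times Y)\times(X\times Y)$: (A)$(\alpha;\alpha',\lambda_u)$(B)$(\beta;\beta',\lambda_s)$ holds if for all $(x_1,y_1)\times(x_2,y_2),(x_1',y_1')\times(x_2',y_2')\in\mathrm{Graph}H$: $|x_1-x_1'|\le\alpha|y_1-y_1'|$ implies $|x_2-x_2'|\le\alpha'|y_2-y_2'|$ and $|y_1-y_1'|\le\lambda_u|y_2-y_2'|$; $|y_2-y_2'|\le\beta|x_2-x_2'|$ implies $|y_1-y_1'|\le\beta'|x_1-x_1'|$ and $|x_2-x_2'|\le\lambda_s|x_1-x_1'|$. (A)$(\alpha,\lambda_u)$(B)$(\beta,\lambda_s)$ means $\alpha'=\alpha$, $\beta'=\beta$. *)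

theory Defs
  imports "HOL-Analysis.Analysis"
begin

definition c0_semigroup :: "(real \<Rightarrow> ('a::banach \<Rightarrow>\<^sub>L 'a)) \<Rightarrow> bool" where
  "c0_semigroup T \<longleftrightarrow>
     T 0 = id_blinfun \<and>
     (\<forall>t s. 0 \<le> t \<longrightarrow> 0 \<le> s \<longrightarrow> T (t + s) = T t o\<^sub>L T s) \<and>
     (\<forall>x. ((\<lambda>t. blinfun_apply (T t) x) \<longlongrightarrow> x) (at_right 0))"

definition lip_max :: "('x::real_normed_vector \<times> 'y::real_normed_vector \<Rightarrow> 'z::real_normed_vector) \<Rightarrow> real \<Rightarrow> bool" where
  "lip_max B eps \<longleftrightarrow>
     (\<forall>p q. norm (B p - B q) \<le> eps * max (norm (fst p - fst q)) (norm (snd p - snd q)))"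

text \<open>Continuous solution of the integral system on [t1,t2]. S is indexed by
  nonpositive reals (S t for t \<le> 0).\<close>
definition solves_sys ::
  "(real \<Rightarrow> ('x::banach \<Rightarrow>\<^sub>L 'x)) \<Rightarrow> (real \<Rightarrow> ('y::banach \<Rightarrow>\<^sub>L 'y)) \<Rightarrow>
   ('x \<times> 'y \<Rightarrow> 'x) \<Rightarrow> ('x \<times> 'y \<Rightarrow> 'y) \<Rightarrow> real \<Rightarrow> real \<Rightarrow>
   (real \<Rightarrow> 'x) \<Rightarrow> (real \<Rightarrow> 'y) \<Rightarrow> bool" where
  "solves_sys T S B1 B2 t1 t2 x y \<longleftrightarrow>
     continuous_on {t1..t2} x \<and> continuous_on {t1..t2} y \<and>
     (\<forall>t\<in>{t1..t2}.
        x t = T (t - t1) (x t1) + integral {t1..t} (\<lambda>s. T (t - s) (B1 (x s, y s))) \<and>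
        y t = S (t - t2) (y t2) - integral {t..t2} (\<lambda>s. S (t - s) (B2 (x s, y s))))"

definition Hcorr ::
  "(real \<Rightarrow> ('x::banach \<Rightarrow>\<^sub>L 'x)) \<Rightarrow> (real \<Rightarrow> ('y::banach \<Rightarrow>\<^sub>L 'y)) \<Rightarrow>
   ('x \<times> 'y \<Rightarrow> 'x) \<Rightarrow> ('x \<times> 'y \<Rightarrow> 'y) \<Rightarrow> real \<Rightarrow>
   ('x \<times> 'y) \<Rightarrow> ('x \<times> 'y) \<Rightarrow> bool" where
  "Hcorr T S B1 B2 s p q \<longleftrightarrow>
     (\<exists>x y. solves_sys T S B1 B2 0 s x y \<and> (x 0, y 0) = p \<and> (x s, y s) = q)"

definition AB_cond ::
  "(('x::real_normed_vector \<times> 'y::real_normed_vector) \<Rightarrow> ('x \<times> 'y) \<Rightarrow> bool) \<Rightarrow>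
   real \<Rightarrow> real \<Rightarrow> real \<Rightarrow> real \<Rightarrow> real \<Rightarrow> real \<Rightarrow> bool" where
  "AB_cond H \<alpha> \<alpha>' lu \<beta> \<beta>' ls \<longleftrightarrow>
     (\<forall>x1 y1 x2 y2 x1' y1' x2' y2'.
        H (x1, y1) (x2, y2) \<longrightarrow> H (x1', y1') (x2', y2') \<longrightarrow>
        (norm (x1 - x1') \<le> \<alpha> * norm (y1 - y1') \<longrightarrow>
            norm (x2 - x2') \<le> \<alpha>' * norm (y2 - y2') \<and>
            norm (y1 - y1') \<le> lu * norm (y2 - y2')) \<and>
        (norm (y2 - y2') \<le> \<beta> * norm (x2 - x2') \<longrightarrow>
            norm (y1 - y1') \<le> \<beta>' * norm (x1 - x1') \<and>
            norm (x2 - x2') \<le> ls * norm (x1 - x1')))"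

end

theory Submission
  imports Defs
begin

lemma gronwall_back:
  fixes g :: "real \<Rightarrow> real"
  assumes rt: "r0 \<le> t" and gc: "continuous_on {r0..t} g" and e0: "0 \<le> e"
    and hyp: "\<And>r. r \<in> {r0..t} \<Longrightarrow> g r \<le> C + e * integral {r..t} g"
    and r: "r \<in> {r0..t}"
  shows "g r \<le> C * exp (e * (t - r))"
proof -
  have gi: "g integrable_on {r0..t}" using gc integrable_continuous_real by blast
  define G where "G u = integral {r0..t} g - integral {r0..u} g" for u
  have GI: "G u = integral {u..t} g" if "u \<in> {r0..t}" for u
    using Henstock_Kurzweil_Integration.integral_combine[where a=r0 and c=u and b=t and f=g] that gi by (auto simp: G_def)
  define F where "F u = exp (e * u) * (C + e * G u)" for u
  have contI: "continuous_on {r0..t} (\<lambda>u. integral {r0..u} g)"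
    using indefinite_integral_continuous_1[OF gi] .
  have Fc: "continuous_on {r..t} F"
    unfolding F_def G_def
    by (intro continuous_intros continuous_on_subset[OF contI]) (use r in auto)
  have "F r \<le> F t"
  proof (rule DERIV_nonneg_imp_increasing_open[OF _ _ Fc])
    show "r \<le> t" using r by auto
    fix x assume x: "r < x" "x < t"
    then have xi: "x \<in> interior {r0..t}" using r by auto
    have d1: "((\<lambda>u. integral {r0..u} g) has_real_derivative g x) (at x)"
    proof -
      have "x \<in> {r0..t}" using x r by auto
      then have "((\<lambda>u. integral {r0..u} g) has_vector_derivative g x) (at x within {r0..t})"
        using integral_has_vector_derivative[OF gc] by blast
      then show ?thesis using at_within_interior[OF xi]
        by (simp add: has_real_derivative_iff_has_vector_derivative)
    qed
    have "(F has_real_derivative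
       (exp (e * x) * e * (C + e * G x) + exp (e * x) * (e * (- g x)))) (at x)"
      unfolding F_def G_def
      by (auto intro!: derivative_eq_intros d1)
    moreover have "0 \<le> exp (e * x) * e * (C + e * G x) + exp (e * x) * (e * (- g x))"
    proof -
      have "g x \<le> C + e * G x" using hyp[of x] GI[of x] x r by auto
      then have "0 \<le> e * (C + e * G x - g x)" using e0 by auto
      then have "0 \<le> exp (e * x) * (e * (C + e * G x - g x))" by simp
      then show ?thesis by (simp add: algebra_simps)
    qed
    ultimately show "\<exists>y. (F has_real_derivative y) (at x) \<and> 0 \<le> y" by blast
  qed
  then have "exp (e * r) * (C + e * G r) \<le> exp (e * t) * C"
    unfolding F_def G_def by simp
  then have "C + e * G r \<le> exp (e * t) * C / exp (e * r)"
    by (simp add: field_simps)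
  also have "\<dots> = C * exp (e * (t - r))"
    by (simp add: exp_diff right_diff_distrib)
  finally show ?thesis using hyp[OF r] GI[OF r] by simp
qed

lemma exp_int_formula:
  fixes g t :: real assumes "0 < g" "0 \<le> t"
  shows "integral {0..t} (\<lambda>s. exp (- g * (t - s))) = (1 - exp (- g * t)) / g"
proof -
  have "((\<lambda>s. exp (- g * (t - s))) has_integral
          (exp (- g * (t - t)) / g - exp (- g * (t - 0)) / g)) {0..t}"
  proof (rule fundamental_theorem_of_calculus)
    show "0 \<le> t" by fact
    fix x assume "x \<in> {0..t}"
    have "((\<lambda>s. exp (- g * (t - s)) / g) has_real_derivative exp (- g * (t - x))) (at x)"
      using assms by (auto intro!: derivative_eq_intros)
    then show "((\<lambda>s. exp (- g * (t - s)) / g) has_vector_derivative exp (- g * (t - x))) (at x within {0..t})"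
      by (simp add: has_real_derivative_iff_has_vector_derivative has_vector_derivative_at_within)
  qed
  then show ?thesis by (simp add: integral_unique diff_divide_distrib)
qed

context
  fixes a b :: "real \<Rightarrow> real" and \<mu>s \<mu>u \<epsilon> h \<tau> :: real
  assumes tau: "0 \<le> \<tau>"
    and ac: "continuous_on {0..\<tau>} a" and bc: "continuous_on {0..\<tau>} b"
    and ann: "\<And>s. s \<in> {0..\<tau>} \<Longrightarrow> 0 \<le> a s"
    and bnn: "\<And>s. s \<in> {0..\<tau>} \<Longrightarrow> 0 \<le> b s"
    and I: "\<And>t t'. 0 \<le> t \<Longrightarrow> t \<le> t' \<Longrightarrow> t' \<le> \<tau> \<Longrightarrow>
       a t' \<le> exp (\<mu>s * (t' - t)) * a t
          + \<epsilon> * integral {t..t'} (\<lambda>s. exp (\<mu>s * (t' - s)) * max (a s) (b s))"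
    and II: "\<And>t t'. 0 \<le> t \<Longrightarrow> t \<le> t' \<Longrightarrow> t' \<le> \<tau> \<Longrightarrow>
       b t \<le> exp (- \<mu>u * (t' - t)) * b t'
          + \<epsilon> * integral {t..t'} (\<lambda>s. exp (- \<mu>u * (s - t)) * max (a s) (b s))"
    and eps: "0 \<le> \<epsilon>" and gpos: "0 < \<mu>u - \<mu>s - \<epsilon>"
    and hlo: "\<epsilon> / (\<mu>u - \<mu>s - \<epsilon>) \<le> h" and h1: "h < 1"
    and start: "a 0 \<le> h * b 0"
begin

lemma stepL:
  assumes t: "t \<in> {0..\<tau>}" and cone: "\<And>s. s \<in> {0..t} \<Longrightarrow> a s \<le> b s"
  shows "b 0 \<le> exp ((- \<mu>u + \<epsilon>) * t) * b t \<and>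
         a t \<le> (\<epsilon> / (\<mu>u - \<mu>s - \<epsilon>) + (h - \<epsilon> / (\<mu>u - \<mu>s - \<epsilon>)) * exp (- (\<mu>u - \<mu>s - \<epsilon>) * t)) * b t"
proof -
  define \<gamma> where "\<gamma> = \<mu>u - \<mu>s - \<epsilon>"
  have g0: "0 < \<gamma>" using gpos by (simp add: \<gamma>_def)
  have h0: "0 \<le> h" using hlo eps g0 by (metis \<gamma>_def divide_nonneg_pos order.trans)
  have sub: "{0..t} \<subseteq> {0..\<tau>}" using t by auto
  have mb: "max (a s) (b s) = b s" if "s \<in> {0..t}" for s using cone[OF that] by simp
  have bct: "continuous_on {0..t} b" using continuous_on_subset[OF bc sub] .
  define g where "g s = exp (- \<mu>u * s) * b s" for s
  have gc: "continuous_on {0..t} g" unfolding g_def by (intro continuous_intros bct)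
  have g_ineq: "g r \<le> g t + \<epsilon> * integral {r..t} g" if r: "r \<in> {0..t}" for r
  proof -
    have "b r \<le> exp (- \<mu>u * (t - r)) * b t
          + \<epsilon> * integral {r..t} (\<lambda>s. exp (- \<mu>u * (s - r)) * max (a s) (b s))"
      using II[of r t] r t by auto
    also have "integral {r..t} (\<lambda>s. exp (- \<mu>u * (s - r)) * max (a s) (b s))
             = integral {r..t} (\<lambda>s. exp (- \<mu>u * (s - r)) * b s)"
      by (rule integral_cong) (use r in \<open>auto simp: mb\<close>)
    finally have 1: "b r \<le> exp (- \<mu>u * (t - r)) * b t
          + \<epsilon> * integral {r..t} (\<lambda>s. exp (- \<mu>u * (s - r)) * b s)" .
    have "g r = exp (- \<mu>u * r) * b r" by (simp add: g_def)
    also have "\<dots> \<le> exp (- \<mu>u * r) * (exp (- \<mu>u * (t - r)) * b t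
          + \<epsilon> * integral {r..t} (\<lambda>s. exp (- \<mu>u * (s - r)) * b s))"
      using 1 by (intro mult_left_mono) auto
    also have "\<dots> = exp (- \<mu>u * r) * exp (- \<mu>u * (t - r)) * b t
          + \<epsilon> * integral {r..t} (\<lambda>s. exp (- \<mu>u * r) * (exp (- \<mu>u * (s - r)) * b s))"
    proof -
      have eq: "integral {r..t} (\<lambda>s. exp (- \<mu>u * r) * (exp (- \<mu>u * (s - r)) * b s))
         = exp (- \<mu>u * r) * integral {r..t} (\<lambda>s. exp (- \<mu>u * (s - r)) * b s)"
        by (rule integral_mult_right)
      show ?thesis unfolding eq by (simp add: algebra_simps)
    qed
    also have "integral {r..t} (\<lambda>s. exp (- \<mu>u * r) * (exp (- \<mu>u * (s - r)) * b s)) = integral {r..t} g"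
      by (rule integral_cong) (simp add: g_def mult.assoc[symmetric] mult_exp_exp, simp add: algebra_simps)
    also have "exp (- \<mu>u * r) * exp (- \<mu>u * (t - r)) * b t = g t"
      by (simp add: g_def mult_exp_exp algebra_simps)
    finally show ?thesis .
  qed
  have gr: "g r \<le> g t * exp (\<epsilon> * (t - r))" if r: "r \<in> {0..t}" for r
    using gronwall_back[of 0 t g \<epsilon> "g t" r] g_ineq gc eps r by auto
  have br: "b r \<le> exp ((- \<mu>u + \<epsilon>) * (t - r)) * b t" if r: "r \<in> {0..t}" for r
  proof -
    have "b r = exp (\<mu>u * r) * g r" by (simp add: g_def mult_exp_exp)
    also have "\<dots> \<le> exp (\<mu>u * r) * (g t * exp (\<epsilon> * (t - r)))"
      using gr[OF r] by (intro mult_left_mono) auto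
    also have "\<dots> = exp ((- \<mu>u + \<epsilon>) * (t - r)) * b t"
      by (simp add: g_def mult_exp_exp algebra_simps)
    finally show ?thesis .
  qed
  have b0: "b 0 \<le> exp ((- \<mu>u + \<epsilon>) * t) * b t" using br[of 0] t by simp
  have "a t \<le> exp (\<mu>s * (t - 0)) * a 0
          + \<epsilon> * integral {0..t} (\<lambda>s. exp (\<mu>s * (t - s)) * max (a s) (b s))"
    using I[of 0 t] t by auto
  also have "integral {0..t} (\<lambda>s. exp (\<mu>s * (t - s)) * max (a s) (b s))
           = integral {0..t} (\<lambda>s. exp (\<mu>s * (t - s)) * b s)"
    by (rule integral_cong) (auto simp: mb)
  also have "integral {0..t} (\<lambda>s. exp (\<mu>s * (t - s)) * b s)
           \<le> integral {0..t} (\<lambda>s. exp (\<mu>s * (t - s)) * (exp ((- \<mu>u + \<epsilon>) * (t - s)) * b t))"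
  proof (rule integral_le)
    show "(\<lambda>s. exp (\<mu>s * (t - s)) * b s) integrable_on {0..t}"
      by (intro integrable_continuous_real continuous_intros bct)
    show "(\<lambda>s. exp (\<mu>s * (t - s)) * (exp ((- \<mu>u + \<epsilon>) * (t - s)) * b t)) integrable_on {0..t}"
      by (intro integrable_continuous_real continuous_intros)
    fix s assume "s \<in> {0..t}"
    then show "exp (\<mu>s * (t - s)) * b s \<le> exp (\<mu>s * (t - s)) * (exp ((- \<mu>u + \<epsilon>) * (t - s)) * b t)"
      using br by (intro mult_left_mono) auto
  qed
  also have "integral {0..t} (\<lambda>s. exp (\<mu>s * (t - s)) * (exp ((- \<mu>u + \<epsilon>) * (t - s)) * b t))
       = integral {0..t} (\<lambda>s. exp (- \<gamma> * (t - s))) * b t"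
  proof -
    have "integral {0..t} (\<lambda>s. exp (\<mu>s * (t - s)) * (exp ((- \<mu>u + \<epsilon>) * (t - s)) * b t))
        = integral {0..t} (\<lambda>s. exp (- \<gamma> * (t - s)) * b t)"
      by (rule integral_cong) (simp add: mult.assoc[symmetric] mult_exp_exp, simp add: algebra_simps \<gamma>_def)
    then show ?thesis by simp
  qed
  also have "integral {0..t} (\<lambda>s. exp (- \<gamma> * (t - s))) = (1 - exp (- \<gamma> * t)) / \<gamma>"
    using exp_int_formula[OF g0] t by auto
  finally have at1: "a t \<le> exp (\<mu>s * t) * a 0 + \<epsilon> * ((1 - exp (- \<gamma> * t)) / \<gamma> * b t)"
    using eps by (simp add: mult_left_mono)
  have "exp (\<mu>s * t) * a 0 \<le> exp (\<mu>s * t) * (h * b 0)"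
    using start by (intro mult_left_mono) auto
  also have "\<dots> \<le> exp (\<mu>s * t) * (h * (exp ((- \<mu>u + \<epsilon>) * t) * b t))"
    using b0 h0 by (intro mult_left_mono) auto
  also have "\<dots> = h * exp (- \<gamma> * t) * b t"
    by (simp add: mult.assoc[symmetric] mult_exp_exp, simp add: algebra_simps \<gamma>_def)
  finally have "a t \<le> h * exp (- \<gamma> * t) * b t + \<epsilon> * ((1 - exp (- \<gamma> * t)) / \<gamma> * b t)"
    using at1 by linarith
  also have "\<dots> = (\<epsilon> / \<gamma> + (h - \<epsilon> / \<gamma>) * exp (- \<gamma> * t)) * b t"
    using g0 by (simp add: field_simps)
  finally show ?thesis using b0 by (simp add: \<gamma>_def)
qed


lemma local_step:
  assumes t0: "t0 \<in> {0..\<tau>}" and cone: "\<And>r. r \<in> {0..t0} \<Longrightarrow> a r \<le> b r"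
    and s: "t0 \<le> s" "s \<le> \<tau>" "s - t0 \<le> \<delta>" and d0: "0 < \<delta>"
    and fd: "exp (c * \<delta>) * exp (c * \<delta>) * h + \<epsilon> * exp (c * \<delta>) * exp (c * \<delta>) * \<delta>
             + \<epsilon> * exp (c * \<delta>) * \<delta> < 1"
    and c: "c = \<bar>\<mu>s\<bar> + \<bar>\<mu>u\<bar>"
  shows "a s \<le> b s"
proof -
  define K where "K = exp (c * \<delta>)"
  have c0: "0 \<le> c" using c by simp
  have K1: "1 \<le> K" unfolding K_def using c0 d0 by simp
  have K0: "0 < K" using K1 by simp
  have fdK: "K * K * h + \<epsilon> * K * K * \<delta> + \<epsilon> * K * \<delta> < 1" using fd by (simp add: K_def)
  define \<gamma> where "\<gamma> = \<mu>u - \<mu>s - \<epsilon>"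
  have g0: "0 < \<gamma>" using gpos by (simp add: \<gamma>_def)
  have h0: "0 \<le> h" using hlo eps g0 by (metis \<gamma>_def divide_nonneg_pos order.trans)
  have hg: "0 \<le> h - \<epsilon> / \<gamma>" using hlo by (simp add: \<gamma>_def)
  have tau0: "t0 \<le> \<tau>" "0 \<le> t0" using t0 by auto
  have L: "a t0 \<le> (\<epsilon> / \<gamma> + (h - \<epsilon> / \<gamma>) * exp (- \<gamma> * t0)) * b t0"
    using stepL[OF t0 cone] by (simp add: \<gamma>_def)
  have "(h - \<epsilon> / \<gamma>) * exp (- \<gamma> * t0) \<le> (h - \<epsilon> / \<gamma>) * 1"
    using hg g0 tau0 by (intro mult_left_mono) auto
  then have "(\<epsilon> / \<gamma> + (h - \<epsilon> / \<gamma>) * exp (- \<gamma> * t0)) * b t0 \<le> h * b t0"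
    using bnn[OF t0] by (intro mult_right_mono) auto
  with L have at0: "a t0 \<le> h * b t0" by linarith
  define m where "m r = max (a r) (b r)" for r
  have sub: "{t0..s} \<subseteq> {0..\<tau>}" using t0 s by auto
  have mc: "continuous_on {t0..s} m" unfolding m_def
    by (intro continuous_intros continuous_on_subset[OF ac sub] continuous_on_subset[OF bc sub])
  obtain r2 where r2: "r2 \<in> {t0..s}" and r2max: "\<And>r. r \<in> {t0..s} \<Longrightarrow> m r \<le> m r2"
    using continuous_attains_sup[OF compact_Icc _ mc] s by auto
  define M where "M = m r2"
  have mnn: "0 \<le> m r" if "r \<in> {t0..s}" for r using ann[of r] sub that by (auto simp: m_def)
  have M0: "0 \<le> M" using mnn[OF r2] by (simp add: M_def)
  have expK1: "exp (\<mu>s * p) \<le> K" if "0 \<le> p" "p \<le> \<delta>" for p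
  proof -
    have "\<mu>s * p \<le> \<bar>\<mu>s\<bar> * p" using that by (intro mult_right_mono) auto
    also have "\<dots> \<le> c * \<delta>" using that c by (intro mult_mono) auto
    finally show ?thesis unfolding K_def by simp
  qed
  have expK2: "exp (- \<mu>u * p) \<le> K" if "0 \<le> p" "p \<le> \<delta>" for p
  proof -
    have "- \<mu>u * p \<le> \<bar>\<mu>u\<bar> * p" using that by (intro mult_right_mono) auto
    also have "\<dots> \<le> c * \<delta>" using that c by (intro mult_mono) auto
    finally show ?thesis unfolding K_def by simp
  qed
  have intI: "integral {u..v} (\<lambda>r. exp (\<mu>s * (v - r)) * max (a r) (b r)) \<le> K * M * \<delta>"
    if uv: "t0 \<le> u" "u \<le> v" "v \<le> s" for u v
  proof -
    have sub2: "{u..v} \<subseteq> {t0..s}" using uv by auto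
    have "integral {u..v} (\<lambda>r. exp (\<mu>s * (v - r)) * max (a r) (b r)) \<le> integral {u..v} (\<lambda>r. K * M)"
    proof (rule integral_le)
      show "(\<lambda>r. exp (\<mu>s * (v - r)) * max (a r) (b r)) integrable_on {u..v}"
        using sub2 sub by (intro integrable_continuous_real continuous_intros
            continuous_on_subset[OF ac] continuous_on_subset[OF bc]) auto
      show "(\<lambda>r. K * M) integrable_on {u..v}" by (rule integrable_const_ivl)
      fix r assume r: "r \<in> {u..v}"
      then have "r \<in> {t0..s}" using sub2 by auto
      then show "exp (\<mu>s * (v - r)) * max (a r) (b r) \<le> K * M"
        using expK1[of "v - r"] r uv s r2max[of r] mnn[of r] K0
        by (intro mult_mono) (auto simp: M_def m_def)
    qed
    also have "\<dots> = (v - u) * (K * M)" using uv by simp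
    also have "\<dots> \<le> \<delta> * (K * M)" using uv s K0 M0 by (intro mult_right_mono) auto
    finally show ?thesis by (simp add: algebra_simps)
  qed
  have intII: "integral {u..v} (\<lambda>r. exp (- \<mu>u * (r - u)) * max (a r) (b r)) \<le> K * M * \<delta>"
    if uv: "t0 \<le> u" "u \<le> v" "v \<le> s" for u v
  proof -
    have sub2: "{u..v} \<subseteq> {t0..s}" using uv by auto
    have "integral {u..v} (\<lambda>r. exp (- \<mu>u * (r - u)) * max (a r) (b r)) \<le> integral {u..v} (\<lambda>r. K * M)"
    proof (rule integral_le)
      show "(\<lambda>r. exp (- \<mu>u * (r - u)) * max (a r) (b r)) integrable_on {u..v}"
        using sub2 sub by (intro integrable_continuous_real continuous_intros
            continuous_on_subset[OF ac] continuous_on_subset[OF bc]) auto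
      show "(\<lambda>r. K * M) integrable_on {u..v}" by (rule integrable_const_ivl)
      fix r assume r: "r \<in> {u..v}"
      then have "r \<in> {t0..s}" using sub2 by auto
      then show "exp (- \<mu>u * (r - u)) * max (a r) (b r) \<le> K * M"
        using expK2[of "r - u"] r uv s r2max[of r] mnn[of r] K0
        by (intro mult_mono) (auto simp: M_def m_def)
    qed
    also have "\<dots> = (v - u) * (K * M)" using uv by simp
    also have "\<dots> \<le> \<delta> * (K * M)" using uv s K0 M0 by (intro mult_right_mono) auto
    finally show ?thesis by (simp add: algebra_simps)
  qed
  have at0nn: "0 \<le> a t0" using ann t0 by auto
  have bsnn: "0 \<le> b s" using bnn s tau0 by auto
  have aI: "a v \<le> K * a t0 + \<epsilon> * (K * M * \<delta>)" if v: "t0 \<le> v" "v \<le> s" for v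
  proof -
    have "a v \<le> exp (\<mu>s * (v - t0)) * a t0
          + \<epsilon> * integral {t0..v} (\<lambda>r. exp (\<mu>s * (v - r)) * max (a r) (b r))"
      using I[of t0 v] v s tau0 by auto
    moreover have "exp (\<mu>s * (v - t0)) * a t0 \<le> K * a t0"
      using expK1[of "v - t0"] v s at0nn by (intro mult_right_mono) auto
    moreover have "\<epsilon> * integral {t0..v} (\<lambda>r. exp (\<mu>s * (v - r)) * max (a r) (b r)) \<le> \<epsilon> * (K * M * \<delta>)"
      using intI[of t0 v] v eps by (intro mult_left_mono) auto
    ultimately show ?thesis by linarith
  qed
  have as: "a s \<le> K * a t0 + \<epsilon> * (K * M * \<delta>)" using aI[of s] s by auto
  have ar2: "a r2 \<le> K * a t0 + \<epsilon> * (K * M * \<delta>)" using aI[of r2] r2 by auto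
  have br2: "b r2 \<le> K * b s + \<epsilon> * (K * M * \<delta>)"
  proof -
    have "b r2 \<le> exp (- \<mu>u * (s - r2)) * b s
          + \<epsilon> * integral {r2..s} (\<lambda>r. exp (- \<mu>u * (r - r2)) * max (a r) (b r))"
      using II[of r2 s] r2 s tau0 by auto
    moreover have "exp (- \<mu>u * (s - r2)) * b s \<le> K * b s"
      using expK2[of "s - r2"] r2 s bsnn by (intro mult_right_mono) auto
    moreover have "\<epsilon> * integral {r2..s} (\<lambda>r. exp (- \<mu>u * (r - r2)) * max (a r) (b r)) \<le> \<epsilon> * (K * M * \<delta>)"
      using intII[of r2 s] r2 eps by (intro mult_left_mono) auto
    ultimately show ?thesis by linarith
  qed
  have bt0M: "b t0 \<le> M" using r2max[of t0] s by (auto simp: M_def m_def)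
  have at0M: "a t0 \<le> h * M" using at0 bt0M h0 by (meson mult_left_mono order.trans)
  have KaM: "K * a t0 \<le> K * (h * M)" using at0M K0 by simp
  show ?thesis
  proof (cases "a r2 \<le> b r2")
    case True
    then have MB: "M = b r2" by (simp add: M_def m_def)
    have "K * a s \<le> K * (K * (h * M) + \<epsilon> * (K * M * \<delta>))"
    proof -
      have "a s \<le> K * (h * M) + \<epsilon> * (K * M * \<delta>)" using as KaM by linarith
      then show ?thesis using K0 by (intro mult_left_mono) auto
    qed
    also have "\<dots> = (K * K * h + \<epsilon> * K * K * \<delta>) * M" by (simp add: algebra_simps)
    also have "\<dots> \<le> (1 - \<epsilon> * K * \<delta>) * M" using fdK M0 by (intro mult_right_mono) auto
    also have "\<dots> \<le> K * b s" using br2 MB by (simp add: algebra_simps)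
    finally show ?thesis using K0 by simp
  next
    case False
    then have MA: "M = a r2" by (simp add: M_def m_def)
    have "K * h \<le> K * K * h" using K1 h0 K0 by (simp add: mult_right_mono)
    moreover have "\<epsilon> * K * \<delta> \<le> \<epsilon> * K * K * \<delta>"
    proof -
      have nn: "0 \<le> \<epsilon> * K * \<delta>" using eps K0 d0 by simp
      have "(\<epsilon> * K * \<delta>) * 1 \<le> (\<epsilon> * K * \<delta>) * K" using mult_left_mono[OF K1 nn] .
      then show ?thesis by (simp add: algebra_simps)
    qed
    moreover have "0 \<le> \<epsilon> * K * \<delta>" using eps K0 d0 by simp
    ultimately have pos: "0 < 1 - K * h - \<epsilon> * K * \<delta>" using fdK by linarith
    have "M \<le> K * (h * M) + \<epsilon> * (K * M * \<delta>)" using ar2 KaM MA by linarith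
    then have "(1 - K * h - \<epsilon> * K * \<delta>) * M \<le> 0" by (simp add: algebra_simps)
    then have "M \<le> 0" using pos by (simp add: mult_le_0_iff)
    moreover have "a s \<le> M" using r2max[of s] s by (auto simp: M_def m_def)
    ultimately show ?thesis using bsnn by linarith
  qed
qed

lemma scalar_main:
  shows "b 0 \<le> exp ((- \<mu>u + \<epsilon>) * \<tau>) * b \<tau> \<and>
         a \<tau> \<le> (\<epsilon> / (\<mu>u - \<mu>s - \<epsilon>) + (h - \<epsilon> / (\<mu>u - \<mu>s - \<epsilon>)) * exp (- (\<mu>u - \<mu>s - \<epsilon>) * \<tau>)) * b \<tau>"
proof -
  define c where "c = \<bar>\<mu>s\<bar> + \<bar>\<mu>u\<bar>"
  define f where "f d = exp (c * d) * exp (c * d) * h + \<epsilon> * exp (c * d) * exp (c * d) * d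
             + \<epsilon> * exp (c * d) * d" for d
  have "isCont f 0" unfolding f_def by (intro continuous_intros)
  then have "(f \<longlongrightarrow> f 0) (at 0)" by (simp add: isCont_def)
  moreover have "f 0 < 1" using h1 by (simp add: f_def)
  ultimately have "eventually (\<lambda>d. f d < 1) (at 0)" by (rule order_tendstoD(2))
  then obtain d0 where d0: "d0 > 0" and dP: "\<And>x. x \<noteq> 0 \<Longrightarrow> dist x 0 < d0 \<Longrightarrow> f x < 1"
    unfolding eventually_at by auto
  define \<delta> where "\<delta> = d0 / 2"
  have dpos: "0 < \<delta>" using d0 by (simp add: \<delta>_def)
  have fd: "f \<delta> < 1" using dP[of \<delta>] d0 by (simp add: \<delta>_def)
  have boot: "\<forall>s\<in>{0..min (real n * \<delta>) \<tau>}. a s \<le> b s" for n :: nat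
  proof (induction n)
    case 0
    have "h * b 0 \<le> 1 * b 0" using h1 bnn[of 0] tau by (intro mult_right_mono) auto
    then have "a 0 \<le> b 0" using start by simp
    then show ?case using tau by auto
  next
    case (Suc n)
    show ?case
    proof
      fix s assume s: "s \<in> {0..min (real (Suc n) * \<delta>) \<tau>}"
      show "a s \<le> b s"
      proof (cases "s \<le> min (real n * \<delta>) \<tau>")
        case True then show ?thesis using Suc.IH s by auto
      next
        case False
        define t0 where "t0 = min (real n * \<delta>) \<tau>"
        have t0e: "t0 = real n * \<delta>" using False s by (auto simp: t0_def)
        have t0in: "t0 \<in> {0..\<tau>}" using t0e dpos tau by (auto simp: t0_def)
        show ?thesis
        proof (rule local_step[OF t0in _ _ _ _ dpos _ c_def])
          show "\<And>r. r \<in> {0..t0} \<Longrightarrow> a r \<le> b r" using Suc.IH by (auto simp: t0_def)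
          show "t0 \<le> s" using False t0_def by auto
          show "s \<le> \<tau>" using s by auto
          show "s - t0 \<le> \<delta>" using s t0e by (auto simp: algebra_simps)
          show "exp (c * \<delta>) * exp (c * \<delta>) * h + \<epsilon> * exp (c * \<delta>) * exp (c * \<delta>) * \<delta>
             + \<epsilon> * exp (c * \<delta>) * \<delta> < 1" using fd by (simp add: f_def)
        qed
      qed
    qed
  qed
  obtain n :: nat where n: "\<tau> / \<delta> \<le> real n" using real_arch_simple by blast
  then have "\<tau> \<le> real n * \<delta>" using dpos by (simp add: field_simps)
  then have "\<forall>s\<in>{0..\<tau>}. a s \<le> b s" using boot[of n] by (simp add: min_def split: if_splits)
  then show ?thesis using stepL[of \<tau>] tau by auto
qed

end


lemma sg_apply:
  assumes "c0_semigroup U" "0 \<le> p" "0 \<le> q"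
  shows "U p (U q w) = U (p + q) w"
  using assms unfolding c0_semigroup_def by auto

lemma sg_cont:
  fixes U :: "real \<Rightarrow> ('a::banach \<Rightarrow>\<^sub>L 'a)"
  assumes sg: "c0_semigroup U" and bd: "\<And>t. 0 \<le> t \<Longrightarrow> norm (U t) \<le> exp (\<omega> * t)"
  shows "continuous_on {0..} (\<lambda>t. U t v)"
  unfolding continuous_on_iff
proof (intro ballI allI impI)
  fix t0 :: real and e :: real assume t0: "t0 \<in> {0..}" and e: "0 < e"
  define E where "E = exp (\<bar>\<omega>\<bar> * t0)"
  have E0: "0 < E" by (simp add: E_def)
  have lim: "((\<lambda>t. U t v) \<longlongrightarrow> v) (at_right 0)" using sg unfolding c0_semigroup_def by auto
  have "eventually (\<lambda>t. dist (U t v) v < e / E) (at_right 0)"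
    using lim e E0 by (simp add: tendsto_iff)
  then obtain d where d: "d > 0" and dP: "\<And>y. 0 < y \<Longrightarrow> y < d \<Longrightarrow> dist (U y v) v < e / E"
    unfolding eventually_at_right_field by auto
  have bdE: "norm (U r) \<le> E" if "0 \<le> r" "r \<le> t0" for r
  proof -
    have "\<omega> * r \<le> \<bar>\<omega>\<bar> * t0" using that
      by (metis abs_ge_self abs_ge_zero mult_mono order_trans abs_mult abs_of_nonneg)
    then show ?thesis using bd[OF that(1)] unfolding E_def by (meson exp_le_cancel_iff order_trans)
  qed
  show "\<exists>d>0. \<forall>t'\<in>{0..}. dist t' t0 < d \<longrightarrow> dist (U t' v) (U t0 v) < e"
  proof (intro exI[of _ d] conjI ballI impI d)
    fix t assume t: "t \<in> {0..}" "dist t t0 < d"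
    consider "t = t0" | "t0 < t" | "t < t0" by linarith
    then show "dist (U t v) (U t0 v) < e"
    proof cases
      case 1 then show ?thesis using e by simp
    next
      case 2
      have eq: "U t v = U t0 (U (t - t0) v)" using sg_apply[OF sg, of t0 "t - t0" v] t0 2 by simp
      have "dist (U t v) (U t0 v) = norm (U t0 (U (t - t0) v - v))"
        by (simp add: eq dist_norm blinfun.diff_right)
      also have "\<dots> \<le> norm (U t0) * norm (U (t - t0) v - v)" by (rule norm_blinfun)
      also have "\<dots> \<le> E * norm (U (t - t0) v - v)"
        using bdE[of t0] t0 by (intro mult_right_mono) auto
      also have "\<dots> < E * (e / E)"
        using dP[of "t - t0"] 2 t E0 by (intro mult_strict_left_mono) (auto simp: dist_norm)
      also have "\<dots> = e" using E0 by simp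
      finally show ?thesis .
    next
      case 3
      have eq: "U t0 v = U t (U (t0 - t) v)" using sg_apply[OF sg, of t "t0 - t" v] t 3 by simp
      have "dist (U t v) (U t0 v) = norm (U t (U (t0 - t) v - v))"
        by (simp add: eq dist_norm blinfun.diff_right norm_minus_commute)
      also have "\<dots> \<le> norm (U t) * norm (U (t0 - t) v - v)" by (rule norm_blinfun)
      also have "\<dots> \<le> E * norm (U (t0 - t) v - v)"
        using bdE[of t] t 3 by (intro mult_right_mono) auto
      also have "\<dots> < E * (e / E)"
        using dP[of "t0 - t"] 3 t E0 by (intro mult_strict_left_mono) (auto simp: dist_norm)
      also have "\<dots> = e" using E0 by simp
      finally show ?thesis .
    qed
  qed
qed

lemma sg_comp_cont:
  fixes U :: "real \<Rightarrow> ('a::banach \<Rightarrow>\<^sub>L 'a)"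
  assumes sg: "c0_semigroup U" and bd: "\<And>t. 0 \<le> t \<Longrightarrow> norm (U t) \<le> exp (\<omega> * t)"
    and gc: "continuous_on A g" and pc: "continuous_on A \<phi>"
    and pr: "\<And>s. s \<in> A \<Longrightarrow> 0 \<le> \<phi> s \<and> \<phi> s \<le> L"
  shows "continuous_on A (\<lambda>s. U (\<phi> s) (g s))"
  unfolding continuous_on_def
proof
  fix s0 assume s0: "s0 \<in> A"
  define K where "K = exp (\<bar>\<omega>\<bar> * L)"
  have c2: "continuous_on A (\<lambda>s. U (\<phi> s) (g s0))"
    by (rule continuous_on_compose2[OF sg_cont[OF sg bd] pc]) (use pr in auto)
  then have l2: "((\<lambda>s. U (\<phi> s) (g s0)) \<longlongrightarrow> U (\<phi> s0) (g s0)) (at s0 within A)"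
    using s0 unfolding continuous_on_def by auto
  have lg: "((\<lambda>s. g s - g s0) \<longlongrightarrow> 0) (at s0 within A)"
    using gc s0 unfolding continuous_on_def by (auto intro: tendsto_eq_intros)
  have "norm (U (\<phi> s) (g s - g s0)) \<le> norm (g s - g s0) * K" if "s \<in> A" for s
  proof -
    have "\<omega> * \<phi> s \<le> \<bar>\<omega>\<bar> * L" using pr[OF that]
      by (metis abs_ge_self abs_ge_zero mult_mono order_trans abs_mult abs_of_nonneg)
    then have "norm (U (\<phi> s)) \<le> K" using bd[of "\<phi> s"] pr[OF that] unfolding K_def
      by (meson exp_le_cancel_iff order_trans)
    then have "norm (U (\<phi> s)) * norm (g s - g s0) \<le> K * norm (g s - g s0)"
      by (intro mult_right_mono) auto
    then show ?thesis using norm_blinfun[of "U (\<phi> s)" "g s - g s0"] by (simp add: mult.commute)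
  qed
  then have "eventually (\<lambda>s. norm (U (\<phi> s) (g s - g s0)) \<le> norm (g s - g s0) * K) (at s0 within A)"
    by (auto simp: eventually_at_filter)
  then have l1: "((\<lambda>s. U (\<phi> s) (g s - g s0)) \<longlongrightarrow> 0) (at s0 within A)"
    by (rule tendsto_0_le[OF lg])
  have "((\<lambda>s. U (\<phi> s) (g s - g s0) + U (\<phi> s) (g s0)) \<longlongrightarrow> 0 + U (\<phi> s0) (g s0)) (at s0 within A)"
    by (rule tendsto_add[OF l1 l2])
  then show "((\<lambda>s. U (\<phi> s) (g s)) \<longlongrightarrow> U (\<phi> s0) (g s0)) (at s0 within A)"
    by (simp add: blinfun.diff_right)
qed

lemma restart_fwd:
  fixes U :: "real \<Rightarrow> ('a::banach \<Rightarrow>\<^sub>L 'a)"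
  assumes sg: "c0_semigroup U" and bd: "\<And>t. 0 \<le> t \<Longrightarrow> norm (U t) \<le> exp (\<omega> * t)"
    and gc: "continuous_on {t1..t2} g"
    and eq: "\<And>t. t \<in> {t1..t2} \<Longrightarrow> z t = U (t - t1) (z t1) + integral {t1..t} (\<lambda>s. U (t - s) (g s))"
    and tt: "t1 \<le> t" "t \<le> t'" "t' \<le> t2"
  shows "z t' = U (t' - t) (z t) + integral {t..t'} (\<lambda>s. U (t' - s) (g s))"
proof -
  have IF: "(\<lambda>s. U (t' - s) (g s)) integrable_on {t1..t'}"
    by (intro integrable_continuous_real sg_comp_cont[OF sg bd, where L = "t' - t1"]
        continuous_on_subset[OF gc] continuous_intros) (use tt in auto)
  have IG: "(\<lambda>s. U (t - s) (g s)) integrable_on {t1..t}"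
    by (intro integrable_continuous_real sg_comp_cont[OF sg bd, where L = "t - t1"]
        continuous_on_subset[OF gc] continuous_intros) (use tt in auto)
  have "U (t' - t) (z t) = U (t' - t) (U (t - t1) (z t1)) + U (t' - t) (integral {t1..t} (\<lambda>s. U (t - s) (g s)))"
    using eq[of t] tt by (simp add: blinfun.add_right)
  also have "U (t' - t) (U (t - t1) (z t1)) = U (t' - t1) (z t1)"
    using sg_apply[OF sg, of "t' - t" "t - t1"] tt by simp
  also have "U (t' - t) (integral {t1..t} (\<lambda>s. U (t - s) (g s)))
      = integral {t1..t} (\<lambda>s. U (t' - t) (U (t - s) (g s)))"
    by (rule integral_blinfun_apply[OF IG, symmetric])
  also have "\<dots> = integral {t1..t} (\<lambda>s. U (t' - s) (g s))"
    by (rule integral_cong) (use sg_apply[OF sg] tt in auto)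
  finally have 1: "U (t' - t) (z t) = U (t' - t1) (z t1) + integral {t1..t} (\<lambda>s. U (t' - s) (g s))" .
  have "z t' = U (t' - t1) (z t1) + integral {t1..t'} (\<lambda>s. U (t' - s) (g s))"
    using eq[of t'] tt by simp
  also have "integral {t1..t'} (\<lambda>s. U (t' - s) (g s))
     = integral {t1..t} (\<lambda>s. U (t' - s) (g s)) + integral {t..t'} (\<lambda>s. U (t' - s) (g s))"
    using Henstock_Kurzweil_Integration.integral_combine[where a=t1 and c=t and b=t', OF _ _ IF] tt by simp
  finally show ?thesis using 1 by (simp add: algebra_simps)
qed

lemma restart_bwd:
  fixes V :: "real \<Rightarrow> ('a::banach \<Rightarrow>\<^sub>L 'a)"
  assumes sg: "c0_semigroup V" and bd: "\<And>t. 0 \<le> t \<Longrightarrow> norm (V t) \<le> exp (\<omega> * t)"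
    and gc: "continuous_on {t1..t2} g"
    and eq: "\<And>t. t \<in> {t1..t2} \<Longrightarrow> z t = V (t2 - t) (z t2) - integral {t..t2} (\<lambda>s. V (s - t) (g s))"
    and tt: "t1 \<le> t" "t \<le> t'" "t' \<le> t2"
  shows "z t = V (t' - t) (z t') - integral {t..t'} (\<lambda>s. V (s - t) (g s))"
proof -
  have IF: "(\<lambda>s. V (s - t) (g s)) integrable_on {t..t2}"
    by (intro integrable_continuous_real sg_comp_cont[OF sg bd, where L = "t2 - t"]
        continuous_on_subset[OF gc] continuous_intros) (use tt in auto)
  have IG: "(\<lambda>s. V (s - t') (g s)) integrable_on {t'..t2}"
    by (intro integrable_continuous_real sg_comp_cont[OF sg bd, where L = "t2 - t'"]
        continuous_on_subset[OF gc] continuous_intros) (use tt in auto)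
  have "V (t' - t) (z t') = V (t' - t) (V (t2 - t') (z t2)) - V (t' - t) (integral {t'..t2} (\<lambda>s. V (s - t') (g s)))"
    using eq[of t'] tt by (simp add: blinfun.diff_right)
  also have "V (t' - t) (V (t2 - t') (z t2)) = V (t2 - t) (z t2)"
    using sg_apply[OF sg, of "t' - t" "t2 - t'"] tt by simp
  also have "V (t' - t) (integral {t'..t2} (\<lambda>s. V (s - t') (g s)))
      = integral {t'..t2} (\<lambda>s. V (t' - t) (V (s - t') (g s)))"
    by (rule integral_blinfun_apply[OF IG, symmetric])
  also have "\<dots> = integral {t'..t2} (\<lambda>s. V (s - t) (g s))"
    by (rule integral_cong) (use sg_apply[OF sg] tt in auto)
  finally have 1: "V (t' - t) (z t') = V (t2 - t) (z t2) - integral {t'..t2} (\<lambda>s. V (s - t) (g s))" .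
  have "z t = V (t2 - t) (z t2) - integral {t..t2} (\<lambda>s. V (s - t) (g s))"
    using eq[of t] tt by simp
  also have "integral {t..t2} (\<lambda>s. V (s - t) (g s))
     = integral {t..t'} (\<lambda>s. V (s - t) (g s)) + integral {t'..t2} (\<lambda>s. V (s - t) (g s))"
    using Henstock_Kurzweil_Integration.integral_combine[where a=t and c=t' and b=t2, OF _ _ IF] tt by simp
  finally have 2: "z t = V (t2 - t) (z t2) - (integral {t..t'} (\<lambda>s. V (s - t) (g s)) + integral {t'..t2} (\<lambda>s. V (s - t) (g s)))" .
  show ?thesis unfolding 1 using 2 by (simp add: diff_diff_eq add.commute)
qed


lemma lip_cont:
  assumes "lip_max B e" "0 \<le> e"
  shows "continuous_on UNIV B"
proof (rule lipschitz_on_continuous_on)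
  show "e-lipschitz_on UNIV B"
  proof (rule lipschitz_onI)
    fix p q :: "'a \<times> 'b" assume _: "p \<in> UNIV" "q \<in> UNIV"
    have "norm (fst (p - q)) \<le> norm (p - q)" using norm_fst_le[of "fst (p - q)" "snd (p - q)"] by (simp only: prod.collapse)
    moreover have "norm (snd (p - q)) \<le> norm (p - q)" using norm_snd_le[of "snd (p - q)" "fst (p - q)"] by (simp only: prod.collapse)
    ultimately have "norm (fst p - fst q) \<le> norm (p - q)" "norm (snd p - snd q) \<le> norm (p - q)" by auto
    then have "max (norm (fst p - fst q)) (norm (snd p - snd q)) \<le> norm (p - q)" by simp
    then have "e * max (norm (fst p - fst q)) (norm (snd p - snd q)) \<le> e * norm (p - q)"
      using assms(2) by (rule mult_left_mono)
    then show "dist (B p) (B q) \<le> e * dist p q"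
      using assms(1) unfolding lip_max_def dist_norm by (meson order_trans)
  qed (use assms in auto)
qed

lemma lip_diff:
  assumes "lip_max B e"
  shows "norm (B (x1, y1) - B (x2, y2)) \<le> e * max (norm (x1 - x2)) (norm (y1 - y2))"
  using assms unfolding lip_max_def by (metis fst_conv snd_conv)

lemma int_bound:
  fixes U :: "real \<Rightarrow> ('a::banach \<Rightarrow>\<^sub>L 'a)" and p q :: real
  assumes sg: "c0_semigroup U" and bd: "\<And>t. 0 \<le> t \<Longrightarrow> norm (U t) \<le> exp (\<omega> * t)"
    and fc: "continuous_on {p..q} f" and fc': "continuous_on {p..q} f'"
    and pc: "continuous_on {p..q} \<phi>" and pr: "\<And>s. s \<in> {p..q} \<Longrightarrow> 0 \<le> \<phi> s \<and> \<phi> s \<le> L"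
    and mc: "continuous_on {p..q} m"
    and le: "\<And>s. s \<in> {p..q} \<Longrightarrow> norm (f s - f' s) \<le> \<epsilon> * m s"
  shows "norm (integral {p..q} (\<lambda>s. U (\<phi> s) (f s)) - integral {p..q} (\<lambda>s. U (\<phi> s) (f' s)))
         \<le> \<epsilon> * integral {p..q} (\<lambda>s. exp (\<omega> * \<phi> s) * m s)"
proof -
  have I1: "(\<lambda>s. U (\<phi> s) (f s)) integrable_on {p..q}"
    by (rule integrable_continuous_real, rule sg_comp_cont[OF sg bd fc pc pr])
  have I2: "(\<lambda>s. U (\<phi> s) (f' s)) integrable_on {p..q}"
    by (intro integrable_continuous_real sg_comp_cont[OF sg bd fc' pc pr])
  have "integral {p..q} (\<lambda>s. U (\<phi> s) (f s)) - integral {p..q} (\<lambda>s. U (\<phi> s) (f' s))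
      = integral {p..q} (\<lambda>s. U (\<phi> s) (f s) - U (\<phi> s) (f' s))"
    by (rule integral_diff[OF I1 I2, symmetric])
  also have "norm \<dots> \<le> integral {p..q} (\<lambda>s. exp (\<omega> * \<phi> s) * (\<epsilon> * m s))"
  proof (rule integral_norm_bound_integral)
    show "(\<lambda>s. U (\<phi> s) (f s) - U (\<phi> s) (f' s)) integrable_on {p..q}"
      using I1 I2 by (rule integrable_diff)
    show "(\<lambda>s. exp (\<omega> * \<phi> s) * (\<epsilon> * m s)) integrable_on {p..q}"
      by (intro integrable_continuous_real continuous_intros pc mc)
    fix s assume s: "s \<in> {p..q}"
    have "norm (U (\<phi> s) (f s) - U (\<phi> s) (f' s)) = norm (U (\<phi> s) (f s - f' s))"
      by (simp add: blinfun.diff_right)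
    also have "\<dots> \<le> norm (U (\<phi> s)) * norm (f s - f' s)" by (rule norm_blinfun)
    also have "\<dots> \<le> exp (\<omega> * \<phi> s) * (\<epsilon> * m s)"
      using bd[of "\<phi> s"] pr[OF s] le[OF s] by (intro mult_mono) auto
    finally show "norm (U (\<phi> s) (f s) - U (\<phi> s) (f' s)) \<le> exp (\<omega> * \<phi> s) * (\<epsilon> * m s)" .
  qed
  also have "integral {p..q} (\<lambda>s. exp (\<omega> * \<phi> s) * (\<epsilon> * m s))
      = integral {p..q} (\<lambda>s. \<epsilon> * (exp (\<omega> * \<phi> s) * m s))"
    by (rule integral_cong) (simp add: algebra_simps)
  also have "\<dots> = \<epsilon> * integral {p..q} (\<lambda>s. exp (\<omega> * \<phi> s) * m s)"
    by (rule integral_mult_right)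
  finally show ?thesis .
qed

lemma integral_refl_shift:
  fixes f :: "real \<Rightarrow> real"
  shows "integral {c - q..c - p} f = integral {p..q} (\<lambda>s. f (c - s))"
proof -
  have "integral {p..q} (\<lambda>s. f (c - s)) = integral {-q..-p} (\<lambda>y. f (y + c))"
    using Henstock_Kurzweil_Integration.integral_reflect_real[of "-p" "-q" "\<lambda>y. f (y + c)"] by (simp add: algebra_simps)
  also have "\<dots> = integral {(c - q) - c..(c - p) - c} (\<lambda>y. f (y + c))" by simp
  also have "\<dots> = integral {c - q..c - p} f" by (rule integral_shift_real_ivl)
  finally show ?thesis by simp
qed


lemma grp1: "(a::'a::ab_group_add) + i - (b + j) = (a - b) + (i - j)" by (simp add: algebra_simps)
lemma grp2: "(a::'a::ab_group_add) - i - (b - j) = (a - b) - (i - j)" by (simp add: algebra_simps)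

lemma core:
  fixes T :: "real \<Rightarrow> ('x::banach \<Rightarrow>\<^sub>L 'x)"
    and S :: "real \<Rightarrow> ('y::banach \<Rightarrow>\<^sub>L 'y)"
    and B1 :: "'x \<times> 'y \<Rightarrow> 'x" and B2 :: "'x \<times> 'y \<Rightarrow> 'y"
    and \<mu>s \<mu>u \<epsilon> \<tau> :: real
  assumes T_sg: "c0_semigroup T"
    and S_sg: "c0_semigroup (\<lambda>t. S (- t))"
    and T_bd: "\<And>t. 0 \<le> t \<Longrightarrow> norm (T t) \<le> exp (\<mu>s * t)"
    and S_bd: "\<And>t. 0 \<le> t \<Longrightarrow> norm (S (- t)) \<le> exp (- \<mu>u * t)"
    and eps_nonneg: "0 \<le> \<epsilon>"
    and B1_lip: "lip_max B1 \<epsilon>"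
    and B2_lip: "lip_max B2 \<epsilon>"
    and gap: "\<mu>u - \<mu>s - 2 * \<epsilon> > 0"
    and tau: "0 \<le> \<tau>"
    and H1: "Hcorr T S B1 B2 \<tau> (x1, y1) (x2, y2)"
    and H2: "Hcorr T S B1 B2 \<tau> (x1', y1') (x2', y2')"
  shows "(\<forall>h. \<epsilon> / (\<mu>u - \<mu>s - \<epsilon>) \<le> h \<and> h < 1 \<and> norm (x1 - x1') \<le> h * norm (y1 - y1') \<longrightarrow>
            norm (y1 - y1') \<le> exp ((- \<mu>u + \<epsilon>) * \<tau>) * norm (y2 - y2') \<and>
            norm (x2 - x2') \<le> (\<epsilon> / (\<mu>u - \<mu>s - \<epsilon>) + (h - \<epsilon> / (\<mu>u - \<mu>s - \<epsilon>))
                 * exp (- (\<mu>u - \<mu>s - \<epsilon>) * \<tau>)) * norm (y2 - y2'))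
       \<and> (\<forall>h. \<epsilon> / (\<mu>u - \<mu>s - \<epsilon>) \<le> h \<and> h < 1 \<and> norm (y2 - y2') \<le> h * norm (x2 - x2') \<longrightarrow>
            norm (x2 - x2') \<le> exp ((\<mu>s + \<epsilon>) * \<tau>) * norm (x1 - x1') \<and>
            norm (y1 - y1') \<le> (\<epsilon> / (\<mu>u - \<mu>s - \<epsilon>) + (h - \<epsilon> / (\<mu>u - \<mu>s - \<epsilon>))
                 * exp (- (\<mu>u - \<mu>s - \<epsilon>) * \<tau>)) * norm (x1 - x1'))"
proof -
  obtain x y where sx: "solves_sys T S B1 B2 0 \<tau> x y" and e1: "(x 0, y 0) = (x1, y1)"
      and e2: "(x \<tau>, y \<tau>) = (x2, y2)"
    using H1 unfolding Hcorr_def by blast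
  obtain x' y' where sx': "solves_sys T S B1 B2 0 \<tau> x' y'" and e1': "(x' 0, y' 0) = (x1', y1')"
      and e2': "(x' \<tau>, y' \<tau>) = (x2', y2')"
    using H2 unfolding Hcorr_def by blast
  have xc: "continuous_on {0..\<tau>} x" and yc: "continuous_on {0..\<tau>} y"
    and eqs: "\<And>t. t \<in> {0..\<tau>} \<Longrightarrow>
        x t = T (t - 0) (x 0) + integral {0..t} (\<lambda>s. T (t - s) (B1 (x s, y s))) \<and>
        y t = S (t - \<tau>) (y \<tau>) - integral {t..\<tau>} (\<lambda>s. S (t - s) (B2 (x s, y s)))"
    using sx unfolding solves_sys_def by blast+
  have xc': "continuous_on {0..\<tau>} x'" and yc': "continuous_on {0..\<tau>} y'"
    and eqs': "\<And>t. t \<in> {0..\<tau>} \<Longrightarrow>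
        x' t = T (t - 0) (x' 0) + integral {0..t} (\<lambda>s. T (t - s) (B1 (x' s, y' s))) \<and>
        y' t = S (t - \<tau>) (y' \<tau>) - integral {t..\<tau>} (\<lambda>s. S (t - s) (B2 (x' s, y' s)))"
    using sx' unfolding solves_sys_def by blast+
  define f where "f s = B1 (x s, y s)" for s
  define f' where "f' s = B1 (x' s, y' s)" for s
  define g where "g s = B2 (x s, y s)" for s
  define g' where "g' s = B2 (x' s, y' s)" for s
  have B1c: "continuous_on UNIV B1" by (rule lip_cont[OF B1_lip eps_nonneg])
  have B2c: "continuous_on UNIV B2" by (rule lip_cont[OF B2_lip eps_nonneg])
  have fc: "continuous_on {0..\<tau>} f" unfolding f_def
    by (rule continuous_on_compose2[OF B1c]) (auto intro: continuous_on_Pair xc yc)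
  have fc': "continuous_on {0..\<tau>} f'" unfolding f'_def
    by (rule continuous_on_compose2[OF B1c]) (auto intro: continuous_on_Pair xc' yc')
  have gc: "continuous_on {0..\<tau>} g" unfolding g_def
    by (rule continuous_on_compose2[OF B2c]) (auto intro: continuous_on_Pair xc yc)
  have gc': "continuous_on {0..\<tau>} g'" unfolding g'_def
    by (rule continuous_on_compose2[OF B2c]) (auto intro: continuous_on_Pair xc' yc')
  have eqx: "\<And>t. t \<in> {0..\<tau>} \<Longrightarrow> x t = T (t - 0) (x 0) + integral {0..t} (\<lambda>s. T (t - s) (f s))"
    unfolding f_def minus_diff_eq using eqs by blast
  have eqx': "\<And>t. t \<in> {0..\<tau>} \<Longrightarrow> x' t = T (t - 0) (x' 0) + integral {0..t} (\<lambda>s. T (t - s) (f' s))"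
    unfolding f'_def minus_diff_eq using eqs' by blast
  have eqy: "\<And>t. t \<in> {0..\<tau>} \<Longrightarrow> y t = S (- (\<tau> - t)) (y \<tau>) - integral {t..\<tau>} (\<lambda>s. S (- (s - t)) (g s))"
    unfolding g_def minus_diff_eq using eqs by blast
  have eqy': "\<And>t. t \<in> {0..\<tau>} \<Longrightarrow> y' t = S (- (\<tau> - t)) (y' \<tau>) - integral {t..\<tau>} (\<lambda>s. S (- (s - t)) (g' s))"
    unfolding g'_def minus_diff_eq using eqs' by blast
  define a where "a r = norm (x r - x' r)" for r
  define b where "b r = norm (y r - y' r)" for r
  have ac: "continuous_on {0..\<tau>} a" unfolding a_def by (intro continuous_intros xc xc')
  have bc: "continuous_on {0..\<tau>} b" unfolding b_def by (intro continuous_intros yc yc')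
  have ann: "\<And>s. s \<in> {0..\<tau>} \<Longrightarrow> 0 \<le> a s" by (simp add: a_def)
  have bnn: "\<And>s. s \<in> {0..\<tau>} \<Longrightarrow> 0 \<le> b s" by (simp add: b_def)
  have I: "a t' \<le> exp (\<mu>s * (t' - t)) * a t
          + \<epsilon> * integral {t..t'} (\<lambda>s. exp (\<mu>s * (t' - s)) * max (a s) (b s))"
    if tt: "0 \<le> t" "t \<le> t'" "t' \<le> \<tau>" for t t'
  proof -
    have rx: "x t' = T (t' - t) (x t) + integral {t..t'} (\<lambda>s. T (t' - s) (f s))"
      by (rule restart_fwd[OF T_sg T_bd fc eqx]) (use tt in auto)
    have rx': "x' t' = T (t' - t) (x' t) + integral {t..t'} (\<lambda>s. T (t' - s) (f' s))"
      by (rule restart_fwd[OF T_sg T_bd fc' eqx']) (use tt in auto)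
    have sub: "{t..t'} \<subseteq> {0..\<tau>}" using tt by auto
    have "x t' - x' t' = T (t' - t) (x t - x' t)
        + (integral {t..t'} (\<lambda>s. T (t' - s) (f s)) - integral {t..t'} (\<lambda>s. T (t' - s) (f' s)))"
      unfolding rx rx' blinfun.diff_right by (rule grp1)
    then have "a t' \<le> norm (T (t' - t) (x t - x' t))
        + norm (integral {t..t'} (\<lambda>s. T (t' - s) (f s)) - integral {t..t'} (\<lambda>s. T (t' - s) (f' s)))"
      unfolding a_def by (simp only: norm_triangle_ineq)
    moreover have "norm (T (t' - t) (x t - x' t)) \<le> exp (\<mu>s * (t' - t)) * a t"
    proof -
      have "norm (T (t' - t) (x t - x' t)) \<le> norm (T (t' - t)) * a t" unfolding a_def by (rule norm_blinfun)
      also have "\<dots> \<le> exp (\<mu>s * (t' - t)) * a t"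
        using T_bd[of "t' - t"] tt by (intro mult_right_mono) (auto simp: a_def)
      finally show ?thesis .
    qed
    moreover have "norm (integral {t..t'} (\<lambda>s. T (t' - s) (f s)) - integral {t..t'} (\<lambda>s. T (t' - s) (f' s)))
        \<le> \<epsilon> * integral {t..t'} (\<lambda>s. exp (\<mu>s * (t' - s)) * max (a s) (b s))"
    proof (rule int_bound[OF T_sg T_bd, where L = "t' - t"])
      show "continuous_on {t..t'} f" using continuous_on_subset[OF fc sub] .
      show "continuous_on {t..t'} f'" using continuous_on_subset[OF fc' sub] .
      show "continuous_on {t..t'} (\<lambda>s. t' - s)" by (intro continuous_intros)
      show "\<And>s. s \<in> {t..t'} \<Longrightarrow> 0 \<le> t' - s \<and> t' - s \<le> t' - t" by auto
      show "continuous_on {t..t'} (\<lambda>s. max (a s) (b s))"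
        by (intro continuous_intros continuous_on_subset[OF ac sub] continuous_on_subset[OF bc sub])
      show "\<And>s. s \<in> {t..t'} \<Longrightarrow> norm (f s - f' s) \<le> \<epsilon> * max (a s) (b s)"
        unfolding f_def f'_def a_def b_def by (rule lip_diff[OF B1_lip])
    qed
    ultimately show ?thesis by linarith
  qed
  have II: "b t \<le> exp (- \<mu>u * (t' - t)) * b t'
          + \<epsilon> * integral {t..t'} (\<lambda>s. exp (- \<mu>u * (s - t)) * max (a s) (b s))"
    if tt: "0 \<le> t" "t \<le> t'" "t' \<le> \<tau>" for t t'
  proof -
    have ry: "y t = S (- (t' - t)) (y t') - integral {t..t'} (\<lambda>s. S (- (s - t)) (g s))"
      by (rule restart_bwd[OF S_sg S_bd gc eqy]) (use tt in auto)
    have ry': "y' t = S (- (t' - t)) (y' t') - integral {t..t'} (\<lambda>s. S (- (s - t)) (g' s))"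
      by (rule restart_bwd[OF S_sg S_bd gc' eqy']) (use tt in auto)
    have sub: "{t..t'} \<subseteq> {0..\<tau>}" using tt by auto
    have "y t - y' t = S (- (t' - t)) (y t' - y' t')
        - (integral {t..t'} (\<lambda>s. S (- (s - t)) (g s)) - integral {t..t'} (\<lambda>s. S (- (s - t)) (g' s)))"
      unfolding ry ry' blinfun.diff_right by (rule grp2)
    then have "b t \<le> norm (S (- (t' - t)) (y t' - y' t'))
        + norm (integral {t..t'} (\<lambda>s. S (- (s - t)) (g s)) - integral {t..t'} (\<lambda>s. S (- (s - t)) (g' s)))"
      unfolding b_def by (simp only: norm_triangle_ineq4)
    moreover have "norm (S (- (t' - t)) (y t' - y' t')) \<le> exp (- \<mu>u * (t' - t)) * b t'"
    proof -
      have "norm (S (- (t' - t)) (y t' - y' t')) \<le> norm (S (- (t' - t))) * b t'" unfolding b_def by (rule norm_blinfun)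
      also have "\<dots> \<le> exp (- \<mu>u * (t' - t)) * b t'"
        using S_bd[of "t' - t"] tt by (intro mult_right_mono) (auto simp: b_def)
      finally show ?thesis .
    qed
    moreover have "norm (integral {t..t'} (\<lambda>s. S (- (s - t)) (g s)) - integral {t..t'} (\<lambda>s. S (- (s - t)) (g' s)))
        \<le> \<epsilon> * integral {t..t'} (\<lambda>s. exp (- \<mu>u * (s - t)) * max (a s) (b s))"
    proof (rule int_bound[OF S_sg S_bd, where L = "t' - t"])
      show "continuous_on {t..t'} g" using continuous_on_subset[OF gc sub] .
      show "continuous_on {t..t'} g'" using continuous_on_subset[OF gc' sub] .
      show "continuous_on {t..t'} (\<lambda>s. s - t)" by (intro continuous_intros)
      show "\<And>s. s \<in> {t..t'} \<Longrightarrow> 0 \<le> s - t \<and> s - t \<le> t' - t" by auto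
      show "continuous_on {t..t'} (\<lambda>s. max (a s) (b s))"
        by (intro continuous_intros continuous_on_subset[OF ac sub] continuous_on_subset[OF bc sub])
      show "\<And>s. s \<in> {t..t'} \<Longrightarrow> norm (g s - g' s) \<le> \<epsilon> * max (a s) (b s)"
        unfolding g_def g'_def a_def b_def by (rule lip_diff[OF B2_lip])
    qed
    ultimately show ?thesis by linarith
  qed
  have gpos: "0 < \<mu>u - \<mu>s - \<epsilon>" using gap eps_nonneg by linarith
  have x0: "x 0 = x1" "y 0 = y1" "x \<tau> = x2" "y \<tau> = y2" using e1 e2 by auto
  have x0': "x' 0 = x1'" "y' 0 = y1'" "x' \<tau> = x2'" "y' \<tau> = y2'" using e1' e2' by auto
  have conclA: "norm (y1 - y1') \<le> exp ((- \<mu>u + \<epsilon>) * \<tau>) * norm (y2 - y2') \<and>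
            norm (x2 - x2') \<le> (\<epsilon> / (\<mu>u - \<mu>s - \<epsilon>) + (h - \<epsilon> / (\<mu>u - \<mu>s - \<epsilon>))
                 * exp (- (\<mu>u - \<mu>s - \<epsilon>) * \<tau>)) * norm (y2 - y2')"
    if hyp: "\<epsilon> / (\<mu>u - \<mu>s - \<epsilon>) \<le> h" "h < 1" "norm (x1 - x1') \<le> h * norm (y1 - y1')" for h
  proof -
    have start: "a 0 \<le> h * b 0" using hyp(3) x0 x0' by (simp add: a_def b_def)
    from scalar_main[OF tau ac bc ann bnn I II eps_nonneg gpos hyp(1) hyp(2) start]
    show ?thesis by (simp add: a_def b_def x0 x0')
  qed
  have conclB: "norm (x2 - x2') \<le> exp ((\<mu>s + \<epsilon>) * \<tau>) * norm (x1 - x1') \<and>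
            norm (y1 - y1') \<le> (\<epsilon> / (\<mu>u - \<mu>s - \<epsilon>) + (h - \<epsilon> / (\<mu>u - \<mu>s - \<epsilon>))
                 * exp (- (\<mu>u - \<mu>s - \<epsilon>) * \<tau>)) * norm (x1 - x1')"
    if hyp: "\<epsilon> / (\<mu>u - \<mu>s - \<epsilon>) \<le> h" "h < 1" "norm (y2 - y2') \<le> h * norm (x2 - x2')" for h
  proof -
    define ar where "ar r = b (\<tau> - r)" for r
    define br where "br r = a (\<tau> - r)" for r
    have img: "(\<lambda>r. \<tau> - r) ` {0..\<tau>} \<subseteq> {0..\<tau>}" by auto
    have arc: "continuous_on {0..\<tau>} ar" unfolding ar_def
      by (rule continuous_on_compose2[OF bc _ img]) (intro continuous_intros)
    have brc: "continuous_on {0..\<tau>} br" unfolding br_def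
      by (rule continuous_on_compose2[OF ac _ img]) (intro continuous_intros)
    have arnn: "\<And>s. s \<in> {0..\<tau>} \<Longrightarrow> 0 \<le> ar s" by (simp add: ar_def b_def)
    have brnn: "\<And>s. s \<in> {0..\<tau>} \<Longrightarrow> 0 \<le> br s" by (simp add: br_def a_def)
    have Ir: "ar r' \<le> exp (- \<mu>u * (r' - r)) * ar r
          + \<epsilon> * integral {r..r'} (\<lambda>s. exp (- \<mu>u * (r' - s)) * max (ar s) (br s))"
      if rr: "0 \<le> r" "r \<le> r'" "r' \<le> \<tau>" for r r'
    proof -
      have 1: "b (\<tau> - r') \<le> exp (- \<mu>u * ((\<tau> - r) - (\<tau> - r'))) * b (\<tau> - r)
          + \<epsilon> * integral {\<tau> - r'..\<tau> - r} (\<lambda>s. exp (- \<mu>u * (s - (\<tau> - r'))) * max (a s) (b s))"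
        by (rule II) (use rr in auto)
      have 2: "integral {\<tau> - r'..\<tau> - r} (\<lambda>s. exp (- \<mu>u * (s - (\<tau> - r'))) * max (a s) (b s))
          = integral {r..r'} (\<lambda>s. exp (- \<mu>u * (r' - s)) * max (ar s) (br s))"
      proof -
        have "integral {\<tau> - r'..\<tau> - r} (\<lambda>s. exp (- \<mu>u * (s - (\<tau> - r'))) * max (a s) (b s))
          = integral {r..r'} (\<lambda>s. (\<lambda>s. exp (- \<mu>u * (s - (\<tau> - r'))) * max (a s) (b s)) (\<tau> - s))"
          by (rule integral_refl_shift)
        also have "\<dots> = integral {r..r'} (\<lambda>s. exp (- \<mu>u * (r' - s)) * max (ar s) (br s))"
          by (rule integral_cong) (simp add: ar_def br_def max.commute algebra_simps)
        finally show ?thesis .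
      qed
      have 3: "(\<tau> - r) - (\<tau> - r') = r' - r" by simp
      show ?thesis using 1 unfolding 2 3 by (simp add: ar_def)
    qed
    have IIr: "br r \<le> exp (- (- \<mu>s) * (r' - r)) * br r'
          + \<epsilon> * integral {r..r'} (\<lambda>s. exp (- (- \<mu>s) * (s - r)) * max (ar s) (br s))"
      if rr: "0 \<le> r" "r \<le> r'" "r' \<le> \<tau>" for r r'
    proof -
      have 1: "a (\<tau> - r) \<le> exp (\<mu>s * ((\<tau> - r) - (\<tau> - r'))) * a (\<tau> - r')
          + \<epsilon> * integral {\<tau> - r'..\<tau> - r} (\<lambda>s. exp (\<mu>s * ((\<tau> - r) - s)) * max (a s) (b s))"
        by (rule I) (use rr in auto)
      have 2: "integral {\<tau> - r'..\<tau> - r} (\<lambda>s. exp (\<mu>s * ((\<tau> - r) - s)) * max (a s) (b s))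
          = integral {r..r'} (\<lambda>s. exp (- (- \<mu>s) * (s - r)) * max (ar s) (br s))"
      proof -
        have "integral {\<tau> - r'..\<tau> - r} (\<lambda>s. exp (\<mu>s * ((\<tau> - r) - s)) * max (a s) (b s))
          = integral {r..r'} (\<lambda>s. (\<lambda>s. exp (\<mu>s * ((\<tau> - r) - s)) * max (a s) (b s)) (\<tau> - s))"
          by (rule integral_refl_shift)
        also have "\<dots> = integral {r..r'} (\<lambda>s. exp (- (- \<mu>s) * (s - r)) * max (ar s) (br s))"
          by (rule integral_cong) (simp add: ar_def br_def max.commute algebra_simps)
        finally show ?thesis .
      qed
      have 3: "(\<tau> - r) - (\<tau> - r') = r' - r" by simp
      have 4: "exp (- (- \<mu>s) * (r' - r)) = exp (\<mu>s * (r' - r))" by simp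
      show ?thesis using 1 unfolding 2 3 4 by (simp add: br_def)
    qed
    have eqg: "- \<mu>s - - \<mu>u - \<epsilon> = \<mu>u - \<mu>s - \<epsilon>" by simp
    have gposB: "0 < - \<mu>s - - \<mu>u - \<epsilon>" using gpos by simp
    have hloB: "\<epsilon> / (- \<mu>s - - \<mu>u - \<epsilon>) \<le> h" unfolding eqg by (rule hyp(1))
    have startB: "ar 0 \<le> h * br 0" using hyp(3) x0 x0' by (simp add: a_def b_def ar_def br_def)
    have R: "br 0 \<le> exp ((- (- \<mu>s) + \<epsilon>) * \<tau>) * br \<tau> \<and>
         ar \<tau> \<le> (\<epsilon> / (- \<mu>s - - \<mu>u - \<epsilon>) + (h - \<epsilon> / (- \<mu>s - - \<mu>u - \<epsilon>))
             * exp (- (- \<mu>s - - \<mu>u - \<epsilon>) * \<tau>)) * br \<tau>"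
      by (rule scalar_main[OF tau arc brc arnn brnn Ir IIr eps_nonneg gposB hloB hyp(2) startB])
    then show ?thesis unfolding eqg by (simp add: a_def b_def ar_def br_def x0 x0')
  qed
  show ?thesis using conclA conclB by blast
qed


lemma coef_le:
  fixes \<gamma> \<epsilon> h \<tau> N :: real
  assumes "0 < \<gamma>" "\<epsilon> / \<gamma> \<le> h" "0 \<le> \<tau>" "0 \<le> N"
  shows "(\<epsilon> / \<gamma> + (h - \<epsilon> / \<gamma>) * exp (- \<gamma> * \<tau>)) * N \<le> h * N"
proof -
  have "exp (- \<gamma> * \<tau>) \<le> 1" using assms by simp
  then have "(h - \<epsilon> / \<gamma>) * exp (- \<gamma> * \<tau>) \<le> (h - \<epsilon> / \<gamma>) * 1"
    using assms by (intro mult_left_mono) auto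
  then show ?thesis using assms(4) by (intro mult_right_mono) auto
qed

lemma coef_le_k:
  fixes \<gamma> \<epsilon> h \<tau> N \<epsilon>1 :: real
  assumes g: "0 < \<gamma>" and e: "0 \<le> \<epsilon>" and h: "\<epsilon> / \<gamma> < h" and e1: "0 < \<epsilon>1" "\<epsilon>1 \<le> \<tau>" and N: "0 \<le> N"
  shows "(\<epsilon> / \<gamma> + (h - \<epsilon> / \<gamma>) * exp (- \<gamma> * \<tau>)) * N
         \<le> (((\<gamma> - \<epsilon> / h) * exp (- \<gamma> * \<epsilon>1) + \<epsilon> / h) / \<gamma> * h) * N"
proof -
  have hpos: "0 < h" using h e g by (meson divide_nonneg_pos le_less_trans)
  have "exp (- \<gamma> * \<tau>) \<le> exp (- \<gamma> * \<epsilon>1)" using g e1 by simp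
  then have "(h - \<epsilon> / \<gamma>) * exp (- \<gamma> * \<tau>) \<le> (h - \<epsilon> / \<gamma>) * exp (- \<gamma> * \<epsilon>1)"
    using h by (intro mult_left_mono) auto
  moreover have "((\<gamma> - \<epsilon> / h) * exp (- \<gamma> * \<epsilon>1) + \<epsilon> / h) / \<gamma> * h
      = \<epsilon> / \<gamma> + (h - \<epsilon> / \<gamma>) * exp (- \<gamma> * \<epsilon>1)"
    using g hpos by (simp add: field_simps)
  ultimately show ?thesis using N by (intro mult_right_mono) auto
qed

lemma k_lt1:
  fixes \<gamma> \<epsilon> h \<epsilon>1 :: real
  assumes g: "0 < \<gamma>" and e: "0 \<le> \<epsilon>" and h: "\<epsilon> / \<gamma> < h" and e1: "0 < \<epsilon>1"
  shows "((\<gamma> - \<epsilon> / h) * exp (- \<gamma> * \<epsilon>1) + \<epsilon> / h) / \<gamma> < 1"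
proof -
  have hpos: "0 < h" using h e g by (meson divide_nonneg_pos le_less_trans)
  have "\<epsilon> < h * \<gamma>" using h g by (simp add: field_simps)
  then have "\<epsilon> / h < \<gamma>" using hpos by (simp add: field_simps)
  then have p: "0 < \<gamma> - \<epsilon> / h" by simp
  have "exp (- \<gamma> * \<epsilon>1) < 1" using g e1 by simp
  then have "(\<gamma> - \<epsilon> / h) * exp (- \<gamma> * \<epsilon>1) < (\<gamma> - \<epsilon> / h) * 1"
    using p by (intro mult_strict_left_mono) auto
  then have "(\<gamma> - \<epsilon> / h) * exp (- \<gamma> * \<epsilon>1) + \<epsilon> / h < \<gamma>" by simp
  then show ?thesis using g by simp
qed

theorem lemma3p4:
  fixes T :: "real \<Rightarrow> ('x::banach \<Rightarrow>\<^sub>L 'x)"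
    and S :: "real \<Rightarrow> ('y::banach \<Rightarrow>\<^sub>L 'y)"
    and B1 :: "'x \<times> 'y \<Rightarrow> 'x" and B2 :: "'x \<times> 'y \<Rightarrow> 'y"
    and \<mu>s \<mu>u \<epsilon> \<alpha> \<beta> :: real
  assumes T_sg: "c0_semigroup T"
    and S_sg: "c0_semigroup (\<lambda>t. S (- t))"
    and T_bd: "\<And>t. 0 \<le> t \<Longrightarrow> norm (T t) \<le> exp (\<mu>s * t)"
    and S_bd: "\<And>t. 0 \<le> t \<Longrightarrow> norm (S (- t)) \<le> exp (- \<mu>u * t)"
    and eps_nonneg: "0 \<le> \<epsilon>"
    and B1_lip: "lip_max B1 \<epsilon>"
    and B2_lip: "lip_max B2 \<epsilon>"
    and gap: "\<mu>u - \<mu>s - 2 * \<epsilon> > 0"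
  shows
    "(\<epsilon> / (\<mu>u - \<mu>s - \<epsilon>) \<le> \<alpha> \<and> \<alpha> < 1 \<and> \<epsilon> / (\<mu>u - \<mu>s - \<epsilon>) \<le> \<beta> \<and> \<beta> < 1 \<longrightarrow>
       (\<forall>t\<ge>0. AB_cond (Hcorr T S B1 B2 t)
                 \<alpha> \<alpha> (exp (- \<mu>u + \<epsilon>) powr t) \<beta> \<beta> (exp (\<mu>s + \<epsilon>) powr t)))
   \<and>
    (\<forall>\<epsilon>1 t. \<epsilon> / (\<mu>u - \<mu>s - \<epsilon>) < \<alpha> \<and> \<alpha> < 1 \<and> \<epsilon> / (\<mu>u - \<mu>s - \<epsilon>) < \<beta> \<and> \<beta> < 1 \<and>
        0 < \<epsilon>1 \<and> \<epsilon>1 \<le> t \<longrightarrow>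
       (let k = (\<lambda>h. ((\<mu>u - \<mu>s - \<epsilon> - \<epsilon> / h) * exp (- (\<mu>u - \<mu>s - \<epsilon>) * \<epsilon>1) + \<epsilon> / h)
                      / (\<mu>u - \<mu>s - \<epsilon>))
        in k \<alpha> < 1 \<and> k \<beta> < 1 \<and>
           AB_cond (Hcorr T S B1 B2 t)
             \<alpha> (k \<alpha> * \<alpha>) (exp (- \<mu>u + \<epsilon>) powr t) \<beta> (k \<beta> * \<beta>) (exp (\<mu>s + \<epsilon>) powr t)))"
proof -
  have gpos: "0 < \<mu>u - \<mu>s - \<epsilon>" using gap eps_nonneg by linarith
  have P1: "AB_cond (Hcorr T S B1 B2 t) \<alpha> \<alpha> (exp (- \<mu>u + \<epsilon>) powr t) \<beta> \<beta> (exp (\<mu>s + \<epsilon>) powr t)"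
    if hyp: "\<epsilon> / (\<mu>u - \<mu>s - \<epsilon>) \<le> \<alpha>" "\<alpha> < 1" "\<epsilon> / (\<mu>u - \<mu>s - \<epsilon>) \<le> \<beta>" "\<beta> < 1" and t: "0 \<le> t" for t
    unfolding AB_cond_def exp_powr_real
  proof (intro allI impI conjI)
    fix x1 y1 x2 y2 x1' y1' x2' y2'
    assume H1: "Hcorr T S B1 B2 t (x1, y1) (x2, y2)" and H2: "Hcorr T S B1 B2 t (x1', y1') (x2', y2')"
    note CC = core[where T=T and S=S and \<mu>s=\<mu>s and \<mu>u=\<mu>u and \<epsilon>=\<epsilon> and \<tau>=t,
        OF T_sg S_sg T_bd S_bd eps_nonneg B1_lip B2_lip gap t H1 H2]
    {
      assume A: "norm (x1 - x1') \<le> \<alpha> * norm (y1 - y1')"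
      have R: "norm (y1 - y1') \<le> exp ((- \<mu>u + \<epsilon>) * t) * norm (y2 - y2') \<and>
            norm (x2 - x2') \<le> (\<epsilon> / (\<mu>u - \<mu>s - \<epsilon>) + (\<alpha> - \<epsilon> / (\<mu>u - \<mu>s - \<epsilon>))
                 * exp (- (\<mu>u - \<mu>s - \<epsilon>) * t)) * norm (y2 - y2')"
        using CC hyp A by blast
      then show "norm (y1 - y1') \<le> exp ((- \<mu>u + \<epsilon>) * t) * norm (y2 - y2')" by blast
      show "norm (x2 - x2') \<le> \<alpha> * norm (y2 - y2')"
        using R coef_le[OF gpos hyp(1) t, of "norm (y2 - y2')"] by simp
    }
    {
      assume B: "norm (y2 - y2') \<le> \<beta> * norm (x2 - x2')"
      have R: "norm (x2 - x2') \<le> exp ((\<mu>s + \<epsilon>) * t) * norm (x1 - x1') \<and>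
            norm (y1 - y1') \<le> (\<epsilon> / (\<mu>u - \<mu>s - \<epsilon>) + (\<beta> - \<epsilon> / (\<mu>u - \<mu>s - \<epsilon>))
                 * exp (- (\<mu>u - \<mu>s - \<epsilon>) * t)) * norm (x1 - x1')"
        using CC hyp B by blast
      then show "norm (x2 - x2') \<le> exp ((\<mu>s + \<epsilon>) * t) * norm (x1 - x1')" by blast
      show "norm (y1 - y1') \<le> \<beta> * norm (x1 - x1')"
        using R coef_le[OF gpos hyp(3) t, of "norm (x1 - x1')"] by simp
    }
  qed
  have P2: "let k = (\<lambda>h. ((\<mu>u - \<mu>s - \<epsilon> - \<epsilon> / h) * exp (- (\<mu>u - \<mu>s - \<epsilon>) * \<epsilon>1) + \<epsilon> / h)
                      / (\<mu>u - \<mu>s - \<epsilon>))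
        in k \<alpha> < 1 \<and> k \<beta> < 1 \<and>
           AB_cond (Hcorr T S B1 B2 t)
             \<alpha> (k \<alpha> * \<alpha>) (exp (- \<mu>u + \<epsilon>) powr t) \<beta> (k \<beta> * \<beta>) (exp (\<mu>s + \<epsilon>) powr t)"
    if hyp: "\<epsilon> / (\<mu>u - \<mu>s - \<epsilon>) < \<alpha>" "\<alpha> < 1" "\<epsilon> / (\<mu>u - \<mu>s - \<epsilon>) < \<beta>" "\<beta> < 1"
       and e1: "0 < \<epsilon>1" "\<epsilon>1 \<le> t" for \<epsilon>1 t
    unfolding Let_def
  proof (intro conjI)
    have t: "0 \<le> t" using e1 by simp
    show "((\<mu>u - \<mu>s - \<epsilon> - \<epsilon> / \<alpha>) * exp (- (\<mu>u - \<mu>s - \<epsilon>) * \<epsilon>1) + \<epsilon> / \<alpha>) / (\<mu>u - \<mu>s - \<epsilon>) < 1"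
      by (rule k_lt1[OF gpos eps_nonneg hyp(1) e1(1)])
    show "((\<mu>u - \<mu>s - \<epsilon> - \<epsilon> / \<beta>) * exp (- (\<mu>u - \<mu>s - \<epsilon>) * \<epsilon>1) + \<epsilon> / \<beta>) / (\<mu>u - \<mu>s - \<epsilon>) < 1"
      by (rule k_lt1[OF gpos eps_nonneg hyp(3) e1(1)])
    show "AB_cond (Hcorr T S B1 B2 t) \<alpha>
     (((\<mu>u - \<mu>s - \<epsilon> - \<epsilon> / \<alpha>) * exp (- (\<mu>u - \<mu>s - \<epsilon>) * \<epsilon>1) + \<epsilon> / \<alpha>) / (\<mu>u - \<mu>s - \<epsilon>) * \<alpha>)
     (exp (- \<mu>u + \<epsilon>) powr t) \<beta>
     (((\<mu>u - \<mu>s - \<epsilon> - \<epsilon> / \<beta>) * exp (- (\<mu>u - \<mu>s - \<epsilon>) * \<epsilon>1) + \<epsilon> / \<beta>) / (\<mu>u - \<mu>s - \<epsilon>) * \<beta>)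
     (exp (\<mu>s + \<epsilon>) powr t)"
      unfolding AB_cond_def exp_powr_real
    proof (intro allI impI conjI)
      fix x1 y1 x2 y2 x1' y1' x2' y2'
      assume H1: "Hcorr T S B1 B2 t (x1, y1) (x2, y2)" and H2: "Hcorr T S B1 B2 t (x1', y1') (x2', y2')"
      note CC = core[where T=T and S=S and \<mu>s=\<mu>s and \<mu>u=\<mu>u and \<epsilon>=\<epsilon> and \<tau>=t,
        OF T_sg S_sg T_bd S_bd eps_nonneg B1_lip B2_lip gap t H1 H2]
      have ha: "\<epsilon> / (\<mu>u - \<mu>s - \<epsilon>) \<le> \<alpha>" "\<epsilon> / (\<mu>u - \<mu>s - \<epsilon>) \<le> \<beta>" using hyp by auto
      {
        assume A: "norm (x1 - x1') \<le> \<alpha> * norm (y1 - y1')"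
        have R: "norm (y1 - y1') \<le> exp ((- \<mu>u + \<epsilon>) * t) * norm (y2 - y2') \<and>
              norm (x2 - x2') \<le> (\<epsilon> / (\<mu>u - \<mu>s - \<epsilon>) + (\<alpha> - \<epsilon> / (\<mu>u - \<mu>s - \<epsilon>))
                   * exp (- (\<mu>u - \<mu>s - \<epsilon>) * t)) * norm (y2 - y2')"
          using CC hyp ha A by blast
        then show "norm (y1 - y1') \<le> exp ((- \<mu>u + \<epsilon>) * t) * norm (y2 - y2')" by blast
        show "norm (x2 - x2') \<le> ((\<mu>u - \<mu>s - \<epsilon> - \<epsilon> / \<alpha>) * exp (- (\<mu>u - \<mu>s - \<epsilon>) * \<epsilon>1) + \<epsilon> / \<alpha>) / (\<mu>u - \<mu>s - \<epsilon>) * \<alpha> * norm (y2 - y2')"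
          using R coef_le_k[OF gpos eps_nonneg hyp(1) e1, of "norm (y2 - y2')"] by simp
      }
      {
        assume B: "norm (y2 - y2') \<le> \<beta> * norm (x2 - x2')"
        have R: "norm (x2 - x2') \<le> exp ((\<mu>s + \<epsilon>) * t) * norm (x1 - x1') \<and>
              norm (y1 - y1') \<le> (\<epsilon> / (\<mu>u - \<mu>s - \<epsilon>) + (\<beta> - \<epsilon> / (\<mu>u - \<mu>s - \<epsilon>))
                   * exp (- (\<mu>u - \<mu>s - \<epsilon>) * t)) * norm (x1 - x1')"
          using CC hyp ha B by blast
        then show "norm (x2 - x2') \<le> exp ((\<mu>s + \<epsilon>) * t) * norm (x1 - x1')" by blast
        show "norm (y1 - y1') \<le> ((\<mu>u - \<mu>s - \<epsilon> - \<epsilon> / \<beta>) * exp (- (\<mu>u - \<mu>s - \<epsilon>) * \<epsilon>1) + \<epsilon> / \<beta>) / (\<mu>u - \<mu>s - \<epsilon>) * \<beta> * norm (x1 - x1')"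
          using R coef_le_k[OF gpos eps_nonneg hyp(3) e1, of "norm (x1 - x1')"] by simp
      }
    qed
  qed
  show ?thesis using P1 P2 by blast
qed

end
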